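(* There exists a function $f:\mathbb{N}\to\mathbb{R}$ with $f(n)/n^3\to0$ as $n\to\infty$ such that the following holds. Let $n$ and $\rho$ be positive integers with $\rho<n/2$, and let $k=\lfloor n/2\rfloor$. Let $s_1,\ldots,s_k$ be nonnegative real numbers satisfying $s_1+\ldots+s_k\leqslant\rho$. Then $$\varphi(s_1,\ldots,s_k):=\sum_{r=\rho}^{k}\min\left\{\frac{r^2}{4},\,1s_1+2s_2+\ldots+rs_r\right\}\leqslant\frac{15\,625\,n^3}{1\,597\,536}+f(n).$$ *)

theory Defs
  imports Complex_Main
begin

end

theory Submission imports Defs "HOL-Real_Asymp.Real_Asymp" begin

lemma tele_inv:
  assumes "0 < i" "i \<le> j"
  shows "(\<Sum>r\<in>{i..<j}. 1 / (real r * (real r + 1))) = 1 / real i - 1 / real j"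
  using assms(2)
proof (induction j rule: dec_induct)
  case base then show ?case by simp
next
  case (step m)
  have m0: "real m > 0" using step assms by simp
  have e: "1 / (real m * (real m + 1)) = 1 / real m - 1 / (real m + 1)" using m0 by (simp add: field_simps)
  have "(\<Sum>r\<in>{i..<Suc m}. 1 / (real r * (real r + 1))) = (\<Sum>r\<in>{i..<m}. 1 / (real r * (real r + 1))) + 1 / (real m * (real m + 1))"
    using step by simp
  also have "\<dots> = 1 / real i - 1 / real m + 1 / (real m * (real m + 1))" using step by simp
  also have "\<dots> = 1 / real i - 1 / real (Suc m)" unfolding e by simp
  finally show ?case .
qed

lemma frac_aux:
  fixes R c :: real assumes "0 < R"
  shows "(1 - c/(R*(R+1)))*(R^2/4) = R^2/4 - c/4 + c/(4*(R+1))"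
proof -
  have a: "R + 1 \<noteq> 0" "R \<noteq> 0" using assms by auto
  have "c/(R*(R+1)) * R^2 = c * R / (R+1)" using a by (simp add: power2_eq_square)
  also have "c * R / (R+1) = c - c / (R+1)" using a by (simp add: field_simps)
  finally have h: "c/(R*(R+1)) * R^2 = c - c / (R+1)" .
  have h2: "(1 - c/(R*(R+1)))*(R^2/4) = R^2/4 - (c/(R*(R+1)) * R^2)/4"
    by (simp only: left_diff_distrib mult_1 times_divide_eq_right diff_divide_distrib)
  have h3: "c/(4*(R+1)) = (c/(R+1))/4" by simp
  show ?thesis unfolding h2 h3 h by (simp add: diff_divide_distrib add_divide_distrib)
qed
lemma cube_ineq:
  fixes x t :: real assumes "0 \<le> x" "0 \<le> t"
  shows "- (x^3) \<le> - 3 * t^2 * x + 2 * t^3"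
proof -
  have "0 \<le> (x - t)^2 * (x + 2*t)" using assms by simp
  also have "(x - t)^2 * (x + 2*t) = x^3 - 3 * t^2 * x + 2 * t^3" by (simp add: algebra_simps power2_eq_square power3_eq_cube)
  finally show ?thesis by simp
qed

lemma lim_f: "(\<lambda>n. 20 * (real n + 1)^2 / real n ^ 3) \<longlonglongrightarrow> 0"
  by real_asymp

lemma main_bound:
  fixes k \<rho> :: nat and s :: "nat \<Rightarrow> real"
  assumes k64: "64 \<le> k" and r1: "1 \<le> \<rho>" and rk: "\<rho> \<le> k"
    and snn: "\<forall>i\<in>{1..k}. 0 \<le> s i" and ssum: "(\<Sum>i=1..k. s i) \<le> real \<rho>"
  shows "(\<Sum>r=\<rho>..k. min (real r ^ 2 / 4) (\<Sum>i=1..r. real i * s i))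
           \<le> 15625 / 199692 * real k ^ 3 + 20 * (real k + 1) ^ 2"
proof -
  define K where "K = real k"
  define A where "A = k div 4 + 1"
  define B where "B = (125 * k) div 129"
  define c where "c = real B * (K + 1 - real B)"
  define y where "y = 125 * K / 129"
  define \<mu> where "\<mu> = (\<lambda>r::nat. if r < A then 0 else if r < B then c / (real r * (real r + 1)) else (1::real))"
  have hK: "64 \<le> K" using k64 unfolding K_def by simp
  have KK: "64 * K \<le> K * K" using hK by (simp add: mult_right_mono)
  have hA1: "K / 4 \<le> real A" unfolding A_def K_def by linarith
  have hA2: "real A \<le> K / 4 + 1" unfolding A_def K_def by linarith
  have n1: "129 * B \<le> 125 * k" unfolding B_def by simp
  have n2: "125 * k < 129 * B + 129" unfolding B_def by linarith
  have hB2: "real B \<le> y" using n1 unfolding y_def K_def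
    by simp
  have "real (125 * k) < real (129 * B + 129)" using n2 by linarith
  hence hB1: "y - 1 \<le> real B" unfolding y_def K_def by simp
  have hBk: "B \<le> k" using n1 by linarith
  have hAB: "A < B" using hA2 hB1 hK unfolding y_def by linarith
  have hB2k: "K + 1 \<le> 2 * real B" using hB1 hK unfolding y_def by linarith
  have hy0: "0 \<le> y - 1" using hK unfolding y_def by simp
  have c0: "0 \<le> c" unfolding c_def using hBk K_def by simp
  have hc_up: "c \<le> 500 * K^2 / 16641 + 2 * K"
  proof -
    have "c \<le> y * (K + 2 - y)" unfolding c_def
      by (rule mult_mono) (use hB2 hB1 hBk K_def hK y_def in auto)
    also have "\<dots> = 500 * K^2 / 16641 + 250 * K / 129" unfolding y_def by (simp add: field_simps power2_eq_square)
    finally show ?thesis using hK by linarith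
  qed
  have hc_low: "(y - 1) * (4 * K / 129) \<le> c" unfolding c_def
    by (rule mult_mono) (use hB2 hB1 hBk K_def hK y_def in auto)
  have hcA: "c \<le> real A * (real A + 1)"
  proof -
    have "real A * (real A + 1) \<ge> (K/4) * (K/4)" using hA1 hK by (intro mult_mono) auto
    hence "K * K / 16 \<le> real A * (real A + 1)" by simp
    thus ?thesis using hc_up KK hK unfolding power2_eq_square by linarith
  qed
  have hA4c: "real A * real A \<le> 4 * c"
  proof -
    have "real A * real A \<le> (K/4+1) * (K/4+1)" using hA2 by (intro mult_mono) auto
    moreover have "(K/4+1) * (K/4+1) = K*K/16 + K/2 + 1" by (simp add: algebra_simps)
    ultimately have a1: "real A * real A \<le> K*K/16 + K/2 + 1" by linarith
    have "(y - 1) * (4 * K / 129) = 500 * (K * K) / 16641 - 4 * K / 129" unfolding y_def by (simp add: field_simps)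
    hence c1: "500 * (K * K) / 16641 - 4 * K / 129 \<le> c" using hc_low by linarith
    show ?thesis using a1 c1 KK hK by linarith
  qed
  have A1: "1 \<le> A" unfolding A_def by simp
  have B0: "0 < real B" using hAB A1 by simp
  have mu0: "0 \<le> \<mu> r" for r unfolding \<mu>_def using c0 by auto
  have mu1: "\<mu> r \<le> 1" for r
  proof (cases "A \<le> r \<and> r < B")
    case True
    have "real A * (real A + 1) \<le> real r * (real r + 1)" using True by (intro mult_mono) auto
    hence "c \<le> real r * (real r + 1)" using hcA by linarith
    moreover have "0 < real r * (real r + 1)" using True A1 by simp
    ultimately show ?thesis using True unfolding \<mu>_def by simp
  next
    case False thus ?thesis unfolding \<mu>_def by auto
  qed
  have SB: "(\<Sum>r\<in>{i..k}. \<mu> r) = c / real i - c / real B + (K + 1 - real B)" if "A \<le> i" "i \<le> B" for i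
  proof -
    have i0: "0 < i" using that A1 by simp
    have "{i..k} = {i..<B} \<union> {B..k}" using that hBk by auto
    hence "(\<Sum>r\<in>{i..k}. \<mu> r) = (\<Sum>r\<in>{i..<B}. \<mu> r) + (\<Sum>r\<in>{B..k}. \<mu> r)"
      by (simp add: sum.union_disjoint ivl_disj_int)
    also have "(\<Sum>r\<in>{i..<B}. \<mu> r) = (\<Sum>r\<in>{i..<B}. c * (1 / (real r * (real r + 1))))"
      using that by (intro sum.cong) (auto simp: \<mu>_def)
    also have "\<dots> = c * (1 / real i - 1 / real B)" using tele_inv[OF i0 that(2)] by (simp only: sum_distrib_left[symmetric])
    also have "(\<Sum>r\<in>{B..k}. \<mu> r) = (\<Sum>r\<in>{B..k}. 1)"
      using hAB by (intro sum.cong) (auto simp: \<mu>_def)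
    also have "\<dots> = K + 1 - real B" using hBk unfolding K_def by (simp add: of_nat_diff)
    finally show ?thesis by (simp add: algebra_simps)
  qed
  have claim1: "real i * (\<Sum>r\<in>{i..k}. \<mu> r) \<le> c" if "1 \<le> i" "i \<le> k" for i
  proof -
    consider "B \<le> i" | "A \<le> i" "i < B" | "i < A" by linarith
    then show ?thesis
    proof cases
      case 1
      have "(\<Sum>r\<in>{i..k}. \<mu> r) = (\<Sum>r\<in>{i..k}. 1)"
        using 1 hAB by (intro sum.cong) (auto simp: \<mu>_def)
      also have "\<dots> = K + 1 - real i" using that unfolding K_def by (simp add: of_nat_diff)
      finally have e: "(\<Sum>r\<in>{i..k}. \<mu> r) = K + 1 - real i" .
      have "0 \<le> (real i - real B) * (real i + real B - K - 1)" using 1 hB2k by (intro mult_nonneg_nonneg) auto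
      thus ?thesis unfolding e c_def by (simp add: algebra_simps)
    next
      case 2
      have "c / real B = K + 1 - real B" unfolding c_def using B0 by simp
      moreover have "real i * (c / real i - c / real B + (K + 1 - real B)) = c - real i * (c / real B) + real i * (K + 1 - real B)"
        using that by (simp add: algebra_simps)
      ultimately show ?thesis using SB[of i] 2 by simp
    next
      case 3
      have "{i..k} = {i..<A} \<union> {A..k}" using 3 hAB hBk by auto
      hence "(\<Sum>r\<in>{i..k}. \<mu> r) = (\<Sum>r\<in>{i..<A}. \<mu> r) + (\<Sum>r\<in>{A..k}. \<mu> r)"
        by (simp add: sum.union_disjoint ivl_disj_int)
      also have "(\<Sum>r\<in>{i..<A}. \<mu> r) = 0" by (intro sum.neutral) (auto simp: \<mu>_def)
      finally have e: "(\<Sum>r\<in>{i..k}. \<mu> r) = (\<Sum>r\<in>{A..k}. \<mu> r)" by simp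
      have SA: "real A * (\<Sum>r\<in>{A..k}. \<mu> r) = c"
      proof -
        have "c / real B = K + 1 - real B" unfolding c_def using B0 by simp
        moreover have "real A * (c / real A - c / real B + (K + 1 - real B)) = c - real A * (c / real B) + real A * (K + 1 - real B)"
          using A1 by (simp add: algebra_simps)
        ultimately show ?thesis using SB[of A] hAB by simp
      qed
      have "real i * (\<Sum>r\<in>{A..k}. \<mu> r) \<le> real A * (\<Sum>r\<in>{A..k}. \<mu> r)"
        using 3 by (intro mult_right_mono sum_nonneg) (auto simp: mu0)
      thus ?thesis using e SA by simp
    qed
  qed
  define T where "T = (\<lambda>r. \<Sum>i=1..r. real i * s i)"
  have claim3: "(\<Sum>r=\<rho>..k. \<mu> r * T r) \<le> real \<rho> * c"
  proof -
    have "(\<Sum>r=\<rho>..k. \<mu> r * T r) = (\<Sum>r=\<rho>..k. \<Sum>i=1..k. (if i \<le> r then \<mu> r * (real i * s i) else 0))"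
    proof (intro sum.cong refl)
      fix r assume r: "r \<in> {\<rho>..k}"
      have "(\<Sum>i=1..k. (if i \<le> r then \<mu> r * (real i * s i) else 0)) = (\<Sum>i\<in>{1..k} \<inter> {i. i \<le> r}. \<mu> r * (real i * s i))"
        by (simp add: sum.If_cases)
      also have "{1..k} \<inter> {i. i \<le> r} = {1..r}" using r by auto
      finally show "\<mu> r * T r = (\<Sum>i=1..k. (if i \<le> r then \<mu> r * (real i * s i) else 0))"
        unfolding T_def by (simp add: sum_distrib_left)
    qed
    also have "\<dots> = (\<Sum>i=1..k. \<Sum>r=\<rho>..k. (if i \<le> r then \<mu> r * (real i * s i) else 0))"
      by (rule sum.swap)
    also have "\<dots> \<le> (\<Sum>i=1..k. s i * c)"
    proof (intro sum_mono)
      fix i assume i: "i \<in> {1..k}"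
      have "(\<Sum>r=\<rho>..k. (if i \<le> r then \<mu> r * (real i * s i) else 0)) = (s i * real i) * (\<Sum>r\<in>{\<rho>..k} \<inter> {r. i \<le> r}. \<mu> r)"
        by (simp add: sum.If_cases sum_distrib_left algebra_simps)
      also have "\<dots> \<le> (s i * real i) * (\<Sum>r\<in>{i..k}. \<mu> r)"
        using snn i by (intro mult_left_mono sum_mono2) (auto simp: mu0)
      also have "\<dots> = s i * (real i * (\<Sum>r\<in>{i..k}. \<mu> r))" by simp
      also have "\<dots> \<le> s i * c" using claim1[of i] i snn by (intro mult_left_mono) auto
      finally show "(\<Sum>r=\<rho>..k. (if i \<le> r then \<mu> r * (real i * s i) else 0)) \<le> s i * c" .
    qed
    also have "\<dots> = (\<Sum>i=1..k. s i) * c" by (simp add: sum_distrib_right)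
    also have "\<dots> \<le> real \<rho> * c" using ssum c0 by (intro mult_right_mono) auto
    finally show ?thesis .
  qed
  have claim2: "(\<Sum>r=\<rho>..k. min (real r ^ 2 / 4) (T r)) \<le> (\<Sum>r=\<rho>..k. (1 - \<mu> r) * (real r ^ 2 / 4)) + (\<Sum>r=\<rho>..k. \<mu> r * T r)"
  proof -
    have "min (real r ^ 2 / 4) (T r) \<le> (1 - \<mu> r) * (real r ^ 2 / 4) + \<mu> r * T r" for r
    proof -
      have "(1 - \<mu> r) * min (real r ^ 2 / 4) (T r) \<le> (1 - \<mu> r) * (real r ^ 2 / 4)"
        using mu1[of r] by (intro mult_left_mono) auto
      moreover have "\<mu> r * min (real r ^ 2 / 4) (T r) \<le> \<mu> r * T r"
        using mu0[of r] by (intro mult_left_mono) auto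
      moreover have "min (real r ^ 2 / 4) (T r) = (1 - \<mu> r) * min (real r ^ 2 / 4) (T r) + \<mu> r * min (real r ^ 2 / 4) (T r)"
        by (simp add: algebra_simps)
      ultimately show ?thesis by linarith
    qed
    hence "(\<Sum>r=\<rho>..k. min (real r ^ 2 / 4) (T r)) \<le> (\<Sum>r=\<rho>..k. (1 - \<mu> r) * (real r ^ 2 / 4) + \<mu> r * T r)"
      by (intro sum_mono) auto
    thus ?thesis by (simp add: sum.distrib)
  qed
  define PA where "PA = ((real B)^3 - (real A)^3)/12 - c*(real B - real A)/4"
  define P where "P = (\<lambda>r::nat. if r < A then PA + ((real A)^3 - (real r)^3)/12
       else if r < B then ((real B)^3 - (real r)^3)/12 - c*(real B - real r)/4 else 0)"
  define e where "e = (real A + 1)/4"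
  have cubeq: "(1 + R)^3 - R^3 = 3*R^2 + 3*R + 1" for R :: real
    by (simp add: algebra_simps power2_eq_square power3_eq_cube)
  have stepP: "(1 - \<mu> r) * (real r ^ 2 / 4) \<le> P r - P (Suc r) + e" for r
  proof -
    consider "r < A" | "A \<le> r" "r < B" | "B \<le> r" by linarith
    then show ?thesis
    proof cases
      case 1
      have "P (Suc r) = PA + ((real A)^3 - (1 + real r)^3)/12"
      proof (cases "Suc r < A")
        case True thus ?thesis unfolding P_def by simp
      next
        case False
        hence "Suc r = A" "real A = 1 + real r" using 1 by auto
        thus ?thesis using hAB unfolding P_def PA_def by simp
      qed
      moreover have "P r = PA + ((real A)^3 - (real r)^3)/12" using 1 unfolding P_def by simp
      ultimately have "P r - P (Suc r) = ((1 + real r)^3 - (real r)^3) / 12" by (simp add: diff_divide_distrib)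
      moreover have "0 \<le> e" unfolding e_def by simp
      ultimately show ?thesis using 1 cubeq[of "real r"] unfolding \<mu>_def by simp
    next
      case 2
      have "P (Suc r) = ((real B)^3 - (1 + real r)^3)/12 - c*(real B - (1 + real r))/4"
      proof (cases "Suc r < B")
        case True thus ?thesis using 2 unfolding P_def by simp
      next
        case False
        hence "Suc r = B" "real B = 1 + real r" using 2 by auto
        thus ?thesis using 2 unfolding P_def by simp
      qed
      moreover have "P r = ((real B)^3 - (real r)^3)/12 - c*(real B - real r)/4" using 2 unfolding P_def by simp
      moreover have "c*(real B - (1 + real r)) = c*(real B - real r) - c" by (simp add: algebra_simps)
      ultimately have dP: "P r - P (Suc r) = ((1 + real r)^3 - (real r)^3) / 12 - c / 4" by argo
      have r0: "0 < real r" using 2 A1 by simp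
      have m: "\<mu> r = c / (real r * (real r + 1))" using 2 unfolding \<mu>_def by simp
      have eq: "(1 - c / (real r * (real r + 1))) * (real r ^ 2 / 4) = real r ^ 2 / 4 - c / 4 + c / (4 * (real r + 1))"
        using frac_aux[OF r0] by simp
      have "real A * (real A + 1) \<le> (real r + 1) * (real A + 1)" using 2 by (intro mult_right_mono) auto
      hence "c \<le> (real r + 1) * (real A + 1)" using hcA by linarith
      hence "c / (4 * (real r + 1)) \<le> e" unfolding e_def using r0 by (simp add: divide_le_eq algebra_simps)
      moreover have fin: "(real r)^2/4 - c/4 + D \<le> (3*(real r)^2 + 3*real r + 1)/12 - c/4 + e" if "D \<le> e" for D
        using that r0 by (simp only: add_divide_distrib diff_divide_distrib)
      ultimately show ?thesis unfolding m eq dP cubeq by blast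
    next
      case 3
      thus ?thesis unfolding P_def \<mu>_def e_def using hAB by simp
    qed
  qed
  have tele: "(\<Sum>r=\<rho>..k. P r - P (Suc r)) = P \<rho> - P (Suc k)"
  proof -
    have "(\<Sum>r=\<rho>..k. P r - P (Suc r)) = - (\<Sum>r=\<rho>..k. P (Suc r) - P r)"
      by (simp add: sum_negf[symmetric])
    also have "\<dots> = P \<rho> - P (Suc k)" using rk by (simp add: sum_Suc_diff)
    finally show ?thesis .
  qed
  have PSk: "P (Suc k) = 0" unfolding P_def using hBk hAB by simp
  have claim4: "(\<Sum>r=\<rho>..k. (1 - \<mu> r) * (real r ^ 2 / 4)) \<le> P \<rho> + K * e"
  proof -
    have "(\<Sum>r=\<rho>..k. (1 - \<mu> r) * (real r ^ 2 / 4)) \<le> (\<Sum>r=\<rho>..k. (P r - P (Suc r)) + e)"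
      by (intro sum_mono stepP)
    also have "\<dots> = P \<rho> + real (Suc k - \<rho>) * e" using tele PSk by (simp add: sum.distrib)
    also have "real (Suc k - \<rho>) * e \<le> K * e" unfolding K_def e_def using r1 rk by (intro mult_right_mono) auto
    finally show ?thesis by simp
  qed
  define V where "V = (15625 / 199692 :: real)"
  define t where "t = 50 * K / 129"
  have t0: "0 \<le> t" unfolding t_def using hK by simp
  have mid: "((real B)^3 - x^3)/12 - c*(real B - x)/4 + x*c \<le> V * K^3 + 3 * K^2"
    if x0: "0 \<le> x" and xK: "x \<le> K" for x
  proof -
    define b where "b = real B"
    have h1: "- (x^3) \<le> - 3*t^2*x + 2*t^3" by (rule cube_ineq[OF x0 t0])
    have h2: "b^3 - 3*(c*b) = 4*b^3 - 3*b^2*(K+1)" unfolding c_def b_def by (simp add: algebra_simps power2_eq_square power3_eq_cube)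
    have h3a: "b^2 * (4*b - 3*(K+1)) \<le> b^2 * (4*y - 3*K)" using hB2 unfolding b_def by (intro mult_left_mono) auto
    have h3b: "b^2 * (4*y - 3*K) \<le> y^2 * (4*y - 3*K)"
    proof (rule mult_right_mono)
      show "b^2 \<le> y^2" using hB2 unfolding b_def by (intro power_mono) auto
      show "0 \<le> 4*y - 3*K" unfolding y_def using hK by simp
    qed
    have h3: "4*b^3 - 3*b^2*(K+1) \<le> 4*y^3 - 3*y^2*K"
      using h3a h3b by (simp add: algebra_simps power2_eq_square power3_eq_cube)
    have h4a: "5*c - t^2 \<le> 10*K"
    proof -
      have "t^2 = 2500*K^2/16641" unfolding t_def by (simp add: power2_eq_square)
      thus ?thesis using hc_up by (simp add: add_divide_distrib diff_divide_distrib)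
    qed
    have h4b: "x*(5*c - t^2) \<le> x*(10*K)" using h4a x0 by (intro mult_left_mono) auto
    have h4c: "x*(10*K) \<le> K*(10*K)" using xK hK by (intro mult_right_mono) auto
    have h4: "5*(x*c) - t^2*x \<le> 10*K^2" using h4b h4c by (simp add: algebra_simps power2_eq_square)
    have h5: "4*y^3 - 3*y^2*K + 2*t^3 = 12 * V * K^3" unfolding y_def t_def V_def
      by (simp add: power2_eq_square power3_eq_cube field_simps)
    have e12: "12 * (((real B)^3 - x^3)/12 - c*(real B - x)/4 + x*c) = (b^3 - 3*(c*b)) - x^3 + 15*(x*c)"
      unfolding b_def by (simp add: field_simps)
    have "12 * (((real B)^3 - x^3)/12 - c*(real B - x)/4 + x*c) \<le> 12 * (V * K^3) + 30 * K^2"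
      using e12 h1 h2 h3 h4 h5 by linarith
    moreover have "0 \<le> K^2" by simp
    moreover have "\<And>L M Q :: real. 12*L \<le> 12*M + 30*Q \<Longrightarrow> 0 \<le> Q \<Longrightarrow> L \<le> M + 3*Q" by linarith
    ultimately show ?thesis by blast
  qed
  have AK: "real A \<le> K" using hA2 hK by linarith
  have claim5: "P \<rho> + real \<rho> * c \<le> V * K^3 + 3 * K^2"
  proof -
    consider "\<rho> < A" | "A \<le> \<rho>" "\<rho> < B" | "B \<le> \<rho>" by linarith
    then show ?thesis
    proof cases
      case 1
      have Pr: "P \<rho> = PA + ((real A)^3 - (real \<rho>)^3)/12" using 1 unfolding P_def by simp
      have f1: "(real A)^3 - (real \<rho>)^3 = (real A - real \<rho>)*((real A)^2 + real A * real \<rho> + (real \<rho>)^2)"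
        by (simp add: algebra_simps power2_eq_square power3_eq_cube)
      have "real A * real \<rho> \<le> real A * real A" using 1 by (intro mult_left_mono) auto
      moreover have "real \<rho> * real \<rho> \<le> real A * real A" using 1 by (intro mult_mono) auto
      ultimately have "(real A)^2 + real A * real \<rho> + (real \<rho>)^2 \<le> 12 * c" using hA4c by (simp add: power2_eq_square)
      hence "(real A - real \<rho>)*((real A)^2 + real A * real \<rho> + (real \<rho>)^2) \<le> (real A - real \<rho>) * (12 * c)"
        using 1 by (intro mult_left_mono) auto
      hence f2: "(real A)^3 - (real \<rho>)^3 \<le> 12 * (real A * c) - 12 * (real \<rho> * c)" using f1 by (simp add: algebra_simps)
      have m: "PA + real A * c \<le> V * K^3 + 3 * K^2" using mid[of "real A"] AK unfolding PA_def by simp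
      have "\<And>Q R S U W :: real. Q \<le> 12*R - 12*S \<Longrightarrow> U + R \<le> W \<Longrightarrow> U + Q/12 + S \<le> W" by linarith
      from this[OF f2 m] show ?thesis unfolding Pr by simp
    next
      case 2
      have "P \<rho> = ((real B)^3 - (real \<rho>)^3)/12 - c*(real B - real \<rho>)/4" using 2 unfolding P_def by simp
      thus ?thesis using mid[of "real \<rho>"] rk unfolding K_def by simp
    next
      case 3
      have P0: "P \<rho> = 0" using 3 hAB unfolding P_def by simp
      have "real \<rho> * c \<le> K * c" using rk c0 unfolding K_def by (intro mult_right_mono) auto
      also have "\<dots> \<le> K * (500 * K^2 / 16641 + 2 * K)" using hc_up hK by (intro mult_left_mono) auto
      also have "\<dots> = 500 * K^3 / 16641 + 2 * K^2" by (simp add: algebra_simps power2_eq_square power3_eq_cube)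
      finally have "real \<rho> * c \<le> 500 * K^3 / 16641 + 2 * K^2" .
      moreover have "0 \<le> K^3" "0 \<le> K^2" using hK by auto
      ultimately show ?thesis unfolding P0 V_def by linarith
    qed
  qed
  have Ke: "K * e \<le> K^2 / 16 + K / 2"
  proof -
    have "K * e \<le> K * ((K/4 + 2)/4)" unfolding e_def using hA2 hK by (intro mult_left_mono) auto
    also have "\<dots> = K^2 / 16 + K / 2" by (simp add: field_simps power2_eq_square)
    finally show ?thesis .
  qed
  have "(\<Sum>r=\<rho>..k. min (real r ^ 2 / 4) (T r)) \<le> V * K^3 + 3 * K^2 + (K^2 / 16 + K / 2)"
    using claim2 claim3 claim4 claim5 Ke by linarith
  also have "\<dots> \<le> V * K^3 + 20 * (K + 1)^2"
  proof -
    have "(K+1)^2 = K^2 + 2*K + 1" by (simp add: power2_eq_square algebra_simps)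
    moreover have "0 \<le> K^2" by simp
    ultimately show ?thesis using hK by linarith
  qed
  finally show ?thesis unfolding T_def V_def K_def .
qed

lemma small_bound:
  fixes k \<rho> :: nat and s :: "nat \<Rightarrow> real"
  assumes k64: "k < 64"
  shows "(\<Sum>r=\<rho>..k. min (real r ^ 2 / 4) (\<Sum>i=1..r. real i * s i))
           \<le> 15625 / 199692 * real k ^ 3 + 20 * (real k + 1) ^ 2"
proof -
  define K where "K = real k"
  have "(\<Sum>r=\<rho>..k. min (real r ^ 2 / 4) (\<Sum>i=1..r. real i * s i)) \<le> (\<Sum>r=\<rho>..k. K * K / 4)"
  proof (intro sum_mono)
    fix r assume "r \<in> {\<rho>..k}"
    hence "real r * real r \<le> K * K" unfolding K_def by (intro mult_mono) auto
    thus "min (real r ^ 2 / 4) (\<Sum>i=1..r. real i * s i) \<le> K * K / 4" by (simp add: power2_eq_square)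
  qed
  also have "\<dots> = real (Suc k - \<rho>) * (K * K / 4)" by simp
  also have "\<dots> \<le> (K + 1) * (K * K / 4)" unfolding K_def by (intro mult_right_mono) auto
  also have "\<dots> \<le> (K + 1) * (16 * (K + 1))"
  proof (intro mult_left_mono)
    have "K * K \<le> 63 * K" using k64 unfolding K_def by (intro mult_right_mono) auto
    thus "K * K / 4 \<le> 16 * (K + 1)" unfolding K_def by simp
  qed (simp add: K_def)
  also have "\<dots> \<le> 15625 / 199692 * K ^ 3 + 20 * (K + 1) ^ 2"
  proof -
    have "(K + 1) * (16 * (K + 1)) \<le> 20 * (K + 1) ^ 2" unfolding K_def by (simp add: power2_eq_square)
    moreover have "0 \<le> K ^ 3" unfolding K_def by simp
    ultimately show ?thesis by linarith
  qed
  finally show ?thesis unfolding K_def .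
qed

theorem proposition7:
  shows "\<exists>f :: nat \<Rightarrow> real.
    (\<lambda>n. f n / real n ^ 3) \<longlonglongrightarrow> 0 \<and>
    (\<forall>(n::nat) (\<rho>::nat) (s :: nat \<Rightarrow> real).
       0 < n \<longrightarrow> 0 < \<rho> \<longrightarrow> real \<rho> < real n / 2 \<longrightarrow>
       (\<forall>i\<in>{1..n div 2}. 0 \<le> s i) \<longrightarrow>
       (\<Sum>i=1..n div 2. s i) \<le> real \<rho> \<longrightarrow>
       (\<Sum>r=\<rho>..n div 2. min (real r ^ 2 / 4) (\<Sum>i=1..r. real i * s i))
         \<le> 15625 * real n ^ 3 / 1597536 + f n)"
proof (intro exI[of _ "\<lambda>n. 20 * (real n + 1)^2"] conjI allI impI)
  show "(\<lambda>n. 20 * (real n + 1)^2 / real n ^ 3) \<longlonglongrightarrow> 0" by (rule lim_f)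
next
  fix n \<rho> :: nat and s :: "nat \<Rightarrow> real"
  assume n0: "0 < n" and r0: "0 < \<rho>" and rn: "real \<rho> < real n / 2"
    and snn: "\<forall>i\<in>{1..n div 2}. 0 \<le> s i" and ss: "(\<Sum>i=1..n div 2. s i) \<le> real \<rho>"
  define k where "k = n div 2"
  have "2 * \<rho> < n" using rn by linarith
  hence rk: "\<rho> \<le> k" unfolding k_def by linarith
  have bound: "(\<Sum>r=\<rho>..k. min (real r ^ 2 / 4) (\<Sum>i=1..r. real i * s i))
           \<le> 15625 / 199692 * real k ^ 3 + 20 * (real k + 1) ^ 2"
  proof (cases "k < 64")
    case True thus ?thesis by (rule small_bound)
  next
    case False
    show ?thesis by (rule main_bound) (use False r0 rk snn ss k_def in auto)
  qed
  have "2 * k \<le> n" unfolding k_def by simp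
  hence "real (2 * k) ^ 3 \<le> real n ^ 3" by (intro power_mono) auto
  hence k3: "8 * real k ^ 3 \<le> real n ^ 3" by (simp add: power_mult_distrib)
  have "k \<le> n" unfolding k_def by simp
  hence "(real k + 1) ^ 2 \<le> (real n + 1) ^ 2" by (intro power_mono) auto
  with k3 bound show "(\<Sum>r=\<rho>..n div 2. min (real r ^ 2 / 4) (\<Sum>i=1..r. real i * s i))
         \<le> 15625 * real n ^ 3 / 1597536 + 20 * (real n + 1)^2"
    unfolding k_def by linarith
qed

end
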